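(* Let $(X,d)$ be a complete metric space and let $G:X\times X\to X$ be a mapping such that (a) $G(x,x)=x$ for all $x\in X$, and (b) for $x,y\in X$, $G(x,y)=x$ implies $y=x$. Let $T:X\to P_{cl}(X)$ be a multivalued operator with $SFix(T)\neq\emptyset$ and let $T_G(x)=\{G(x,u):u\in T(x)\}$ be the admissible perturbation of $T$ corresponding to $G$. Suppose there exist $\alpha,\beta,\gamma\ge0$ with $\alpha+\beta+\gamma<1$ such that $$H(T_G(x),T_G(y))\le\alpha d(x,y)+\beta D(x,T_G(y))+\gamma D(y,T_G(x))\quad\text{for all }x,y\in X.$$ Then: (i) $Fix(T)=SFix(T)=\{x^*\}$ for some $x^*\in X$; (ii) if additionally there exists $l\in(0,1)$ with $H(T(x),\{x^*\})\le l\,H(T_G(x),\{x^*\})$ for all $x\in X$, then for each $x\in X$ the sequence $(T^n(x))_{n\in\mathbb N}$ converges to $\{x^*\}$ with respect to $H$, i.e. $H(T^n(x),\{x^*\})\to0$; (iii) if additionally there exists $L>0$ such that $D(x,T_G(x))\le L\,D(x,T(x))$ for all $x\in X$, then for some $\xi\in(0,1)$, $$d(x,x^* )\le\frac{(1+\gamma)L}{(1-\alpha-\beta)\xi}D(x,T(x))\quad\text{for all }x\in X.$$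
   Context: $P_{cl}(X)$ is the family of nonempty closed subsets of $X$. $Fix(T)=\{x:x\in T(x)\}$, $SFix(T)=\{x:T(x)=\{x\}\}$. For nonempty $A,B\subseteq X$: $D(a,B)=\inf_{b\in B}d(a,b)$, $D(A,B)=\inf\{d(a,b):a\in A,b\in B\}$, $e(A,B)=\sup_{a\in A}D(a,B)$, $H(A,B)=\max\{e(A,B),e(B,A)\}$. Iterates: $T^0(x)=\{x\}$, $T^{n}(x)=\bigcup_{y\in T^{n-1}(x)}T(y)$. *)

theory Defs
  imports "HOL-Analysis.Analysis"
begin

text \<open>D(a,B) is the library's infdist. Excess and Hausdorff (generalized, possibly infinite)
  are ereal-valued.\<close>

definition excess :: "'a::metric_space set \<Rightarrow> 'a set \<Rightarrow> ereal" where
  "excess A B = (SUP a\<in>A. ereal (infdist a B))"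

definition Hdist :: "'a::metric_space set \<Rightarrow> 'a set \<Rightarrow> ereal" where
  "Hdist A B = max (excess A B) (excess B A)"

definition Fix :: "('a \<Rightarrow> 'a set) \<Rightarrow> 'a set" where
  "Fix T = {x. x \<in> T x}"

definition SFix :: "('a \<Rightarrow> 'a set) \<Rightarrow> 'a set" where
  "SFix T = {x. T x = {x}}"

fun mv_iter :: "('a \<Rightarrow> 'a set) \<Rightarrow> nat \<Rightarrow> 'a \<Rightarrow> 'a set" where
  "mv_iter T 0 x = {x}"
| "mv_iter T (Suc n) x = (\<Union>y\<in>mv_iter T n x. T y)"

definition adm_pert :: "('a \<Rightarrow> 'a \<Rightarrow> 'a) \<Rightarrow> ('a \<Rightarrow> 'a set) \<Rightarrow> 'a \<Rightarrow> 'a set" where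
  "adm_pert G T x = (\<lambda>u. G x u) ` T x"

end

theory Submission
  imports Defs
begin

lemma excess_ge: "a \<in> A \<Longrightarrow> ereal (infdist a B) \<le> excess A B"
  unfolding excess_def by (rule SUP_upper)

lemma excess_single_left: "excess {p} B = ereal (infdist p B)"
  unfolding excess_def by simp

lemma excess_le: "(\<And>a. a \<in> A \<Longrightarrow> infdist a B \<le> c) \<Longrightarrow> excess A B \<le> ereal c"
  unfolding excess_def by (rule SUP_least) simp

lemma Hdist_mem_le:
  assumes "Hdist A {p} \<le> ereal c" "a \<in> A" shows "dist a p \<le> c"
proof -
  have "ereal (infdist a {p}) \<le> Hdist A {p}"
    using excess_ge[OF assms(2), of "{p}"] unfolding Hdist_def by (simp add: le_max_iff_disj)
  then have "ereal (dist a p) \<le> Hdist A {p}" by (simp add: infdist_singleton)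
  then have "ereal (dist a p) \<le> ereal c" using assms(1) by (rule order_trans)
  then show ?thesis by simp
qed

lemma Hdist_inf_le:
  assumes "Hdist A {p} \<le> ereal c" shows "infdist p A \<le> c"
proof -
  have "ereal (infdist p A) \<le> Hdist A {p}"
    unfolding Hdist_def excess_single_left by simp
  then have "ereal (infdist p A) \<le> ereal c" using assms by (rule order_trans)
  then show ?thesis by simp
qed

lemma Hdist_le:
  assumes "A \<noteq> {}" "\<And>a. a \<in> A \<Longrightarrow> dist a p \<le> c" shows "Hdist A {p} \<le> ereal c"
proof -
  have 1: "excess A {p} \<le> ereal c" by (rule excess_le) (simp add: infdist_singleton assms(2))
  obtain a where a: "a \<in> A" using assms(1) by blast
  have "infdist p A \<le> c" using infdist_le[OF a, of p] assms(2)[OF a] by (simp add: dist_commute)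
  then have 2: "excess {p} A \<le> ereal c" by (simp add: excess_single_left)
  show ?thesis using 1 2 unfolding Hdist_def by simp
qed

lemma Hdist_nonneg:
  assumes "A \<noteq> {}" shows "0 \<le> Hdist A B"
proof -
  obtain a where a: "a \<in> A" using assms by blast
  have "ereal 0 \<le> ereal (infdist a B)" by (simp add: infdist_nonneg)
  also have "\<dots> \<le> excess A B" by (rule excess_ge[OF a])
  finally have "0 \<le> excess A B" by (simp add: zero_ereal_def)
  then show ?thesis unfolding Hdist_def by (simp add: le_max_iff_disj)
qed

theorem mainTheorem3:
  fixes G :: "'a::complete_space \<Rightarrow> 'a \<Rightarrow> 'a"
    and T :: "'a \<Rightarrow> 'a set"
    and \<alpha> \<beta> \<gamma> :: real
  assumes G_diag: "\<And>x. G x x = x"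
    and G_inj: "\<And>x y. G x y = x \<Longrightarrow> y = x"
    and T_ne: "\<And>x. T x \<noteq> {}"
    and T_closed: "\<And>x. closed (T x)"
    and SFix_ne: "SFix T \<noteq> {}"
    and coef: "\<alpha> \<ge> 0" "\<beta> \<ge> 0" "\<gamma> \<ge> 0" "\<alpha> + \<beta> + \<gamma> < 1"
    and contr: "\<And>x y. Hdist (adm_pert G T x) (adm_pert G T y)
        \<le> ereal (\<alpha> * dist x y + \<beta> * infdist x (adm_pert G T y) + \<gamma> * infdist y (adm_pert G T x))"
  shows "\<exists>xs. Fix T = {xs} \<and> SFix T = {xs}
    \<and> ((\<exists>l::real. 0 < l \<and> l < 1 \<and>
          (\<forall>x. Hdist (T x) {xs} \<le> ereal l * Hdist (adm_pert G T x) {xs}))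
        \<longrightarrow> (\<forall>x. (\<lambda>n. Hdist (mv_iter T n x) {xs}) \<longlonglongrightarrow> 0))
    \<and> (\<forall>L::real. L > 0 \<longrightarrow>
          (\<forall>x. infdist x (adm_pert G T x) \<le> L * infdist x (T x))
        \<longrightarrow> (\<exists>\<xi>::real. 0 < \<xi> \<and> \<xi> < 1 \<and>
              (\<forall>x. dist x xs \<le> (1 + \<gamma>) * L / ((1 - \<alpha> - \<beta>) * \<xi>) * infdist x (T x))))"
proof -
  obtain xs where xs: "T xs = {xs}" using SFix_ne unfolding SFix_def by blast
  define TG where "TG = adm_pert G T"
  have TGxs: "TG xs = {xs}" unfolding TG_def adm_pert_def using xs G_diag by simp
  have TGne: "TG x \<noteq> {}" for x unfolding TG_def adm_pert_def using T_ne by simp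
  define s where "s = \<alpha> + \<beta>"
  have g1: "1 - \<gamma> > 0" and s0: "s \<ge> 0" and sg: "s + \<gamma> < 1" using coef by (auto simp: s_def)
  have key: "infdist xs (TG x) \<le> s * dist x xs / (1 - \<gamma>) \<and>
     (\<forall>a\<in>TG x. dist a xs \<le> s * dist x xs / (1 - \<gamma>))" for x
  proof -
    define d where "d = dist x xs"
    define h where "h = infdist xs (TG x)"
    have c: "Hdist (TG x) {xs} \<le> ereal (s * d + \<gamma> * h)"
      using contr[of x xs] unfolding TG_def[symmetric] TGxs
      by (simp add: infdist_singleton s_def d_def h_def algebra_simps)
    have "h \<le> s * d + \<gamma> * h" using Hdist_inf_le[OF c] h_def by simp
    then have "h * (1 - \<gamma>) \<le> s * d" by (simp add: algebra_simps)
    then have hle: "h \<le> s * d / (1 - \<gamma>)" using g1 by (simp add: pos_le_divide_eq)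
    have "s * d + \<gamma> * h \<le> s * d / (1 - \<gamma>)"
    proof -
      have "\<gamma> * h \<le> \<gamma> * (s * d / (1 - \<gamma>))" using hle coef(3) by (rule mult_left_mono)
      moreover have "s * d + \<gamma> * (s * d / (1 - \<gamma>)) = s * d / (1 - \<gamma>)"
        using g1 by (simp add: field_simps)
      ultimately show ?thesis by linarith
    qed
    then show ?thesis using Hdist_mem_le[OF c] hle unfolding d_def h_def by force
  qed
  define k where "k = s / (1 - \<gamma>)"
  have k0: "k \<ge> 0" and k1: "k < 1" using g1 s0 sg by (auto simp: k_def field_simps)
  have keyk: "a \<in> TG x \<Longrightarrow> dist a xs \<le> k * dist x xs" for a x
    using key[of x] by (auto simp: k_def)
  have HTG: "Hdist (TG x) {xs} \<le> ereal (k * dist x xs)" for x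
    using Hdist_le[OF TGne keyk] by blast
  have FixTG: "x \<in> T x \<longleftrightarrow> x \<in> TG x" for x
    unfolding TG_def adm_pert_def using G_diag G_inj by (auto intro: image_eqI[where x=x]) (metis)
  have Fix: "Fix T = {xs}"
  proof
    show "Fix T \<subseteq> {xs}"
    proof
      fix x assume "x \<in> Fix T"
      then have "x \<in> TG x" using FixTG unfolding Fix_def by simp
      then have "dist x xs \<le> k * dist x xs" by (rule keyk)
      then have "dist x xs = 0" using k1 zero_le_dist[of x xs]
        by (metis mult_le_cancel_right1 not_le order_antisym_conv zero_le_dist)
      then show "x \<in> {xs}" by simp
    qed
    show "{xs} \<subseteq> Fix T" using xs unfolding Fix_def by simp
  qed
  have SFix: "SFix T = {xs}"
  proof -
    have "SFix T \<subseteq> Fix T" unfolding SFix_def Fix_def by auto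
    moreover have "xs \<in> SFix T" using xs unfolding SFix_def by simp
    ultimately show ?thesis using Fix by auto
  qed
  have part2: "(\<forall>x. (\<lambda>n. Hdist (mv_iter T n x) {xs}) \<longlonglongrightarrow> 0)"
    if hyp: "\<exists>l::real. 0 < l \<and> l < 1 \<and> (\<forall>x. Hdist (T x) {xs} \<le> ereal l * Hdist (adm_pert G T x) {xs})"
  proof
    fix x0
    obtain l where l: "0 < l" "l < 1" "\<And>x. Hdist (T x) {xs} \<le> ereal l * Hdist (adm_pert G T x) {xs}"
      using hyp by blast
    define q where "q = l * k"
    have q0: "q \<ge> 0" and q1: "q < 1" using l k0 k1 unfolding q_def
      by (auto intro: mult_strict_mono[of l 1 k 1, simplified])
    have step: "y \<in> T x \<Longrightarrow> dist y xs \<le> q * dist x xs" for x y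
    proof -
      assume y: "y \<in> T x"
      have "Hdist (T x) {xs} \<le> ereal l * ereal (k * dist x xs)"
        using l(3)[of x, folded TG_def] ereal_mult_left_mono[OF HTG[of x], of "ereal l"] l(1) by auto
      then have "Hdist (T x) {xs} \<le> ereal (q * dist x xs)" by (simp add: q_def mult.assoc)
      then show ?thesis using Hdist_mem_le y by blast
    qed
    have it: "mv_iter T n x0 \<noteq> {} \<and> (\<forall>y\<in>mv_iter T n x0. dist y xs \<le> q ^ n * dist x0 xs)" for n
    proof (induction n)
      case 0 then show ?case by simp
    next
      case (Suc n)
      then have ne: "mv_iter T (Suc n) x0 \<noteq> {}" using T_ne by auto
      have "\<forall>y\<in>mv_iter T (Suc n) x0. dist y xs \<le> q ^ Suc n * dist x0 xs"
      proof
        fix y assume "y \<in> mv_iter T (Suc n) x0"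
        then obtain z where z: "z \<in> mv_iter T n x0" "y \<in> T z" by auto
        have "dist y xs \<le> q * dist z xs" by (rule step[OF z(2)])
        also have "\<dots> \<le> q * (q ^ n * dist x0 xs)" using Suc z(1) q0 by (simp add: mult_left_mono)
        finally show "dist y xs \<le> q ^ Suc n * dist x0 xs" by (simp add: mult.assoc)
      qed
      then show ?case using ne by blast
    qed
    have up: "Hdist (mv_iter T n x0) {xs} \<le> ereal (q ^ n * dist x0 xs)" for n
      using it[of n] Hdist_le by blast
    have lo: "0 \<le> Hdist (mv_iter T n x0) {xs}" for n using it[of n] Hdist_nonneg by blast
    have "(\<lambda>n. q ^ n * dist x0 xs) \<longlonglongrightarrow> 0 * dist x0 xs"
      by (intro tendsto_mult tendsto_const LIMSEQ_power_zero) (use q0 q1 in auto)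
    then have "(\<lambda>n. ereal (q ^ n * dist x0 xs)) \<longlonglongrightarrow> ereal 0"
      by (simp add: tendsto_ereal)
    then show "(\<lambda>n. Hdist (mv_iter T n x0) {xs}) \<longlonglongrightarrow> 0"
      using tendsto_sandwich[of "\<lambda>n. 0" _ sequentially "\<lambda>n. ereal (q ^ n * dist x0 xs)" 0]
        lo up by (simp add: zero_ereal_def)
  qed
  have part3: "\<exists>\<xi>::real. 0 < \<xi> \<and> \<xi> < 1 \<and>
              (\<forall>x. dist x xs \<le> (1 + \<gamma>) * L / ((1 - \<alpha> - \<beta>) * \<xi>) * infdist x (T x))"
    if L: "L > 0" "\<forall>x. infdist x (adm_pert G T x) \<le> L * infdist x (T x)" for L
  proof -
    define \<xi> where "\<xi> = (1 - s - \<gamma>) / (2 * (1 - s))"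
    have s1: "1 - s > 0" using sg coef(3) by linarith
    have xi0: "\<xi> > 0" using sg s1 by (simp add: \<xi>_def)
    have xi1: "\<xi> < 1" using sg s1 coef(3) by (simp add: \<xi>_def field_simps)
    have C: "(1 + \<gamma>) * L / ((1 - \<alpha> - \<beta>) * \<xi>) = 2 * (1 + \<gamma>) * L / (1 - s - \<gamma>)"
    proof -
      have "(1 - \<alpha> - \<beta>) * \<xi> = (1 - s - \<gamma>) / 2"
        using s1 unfolding \<xi>_def by (simp add: s_def field_simps)
      then show ?thesis by (simp only:) (simp add: field_simps)
    qed
    have "dist x xs \<le> (1 + \<gamma>) * L / ((1 - \<alpha> - \<beta>) * \<xi>) * infdist x (T x)" for x
    proof -
      define d where "d = dist x xs"
      define e where "e = infdist x (TG x)"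
      have e0: "e \<ge> 0" by (simp add: e_def infdist_nonneg)
      have de: "d \<le> e + k * d"
      proof -
        have "\<forall>a\<in>TG x. d - k * d \<le> dist x a"
        proof
          fix a assume a: "a \<in> TG x"
          have "d \<le> dist x a + dist a xs" unfolding d_def by (rule dist_triangle)
          then show "d - k * d \<le> dist x a" using keyk[OF a] unfolding d_def by linarith
        qed
        then have "d - k * d \<le> e" unfolding e_def using TGne
          by (simp add: infdist_notempty[OF TGne] cINF_greatest)
        then show ?thesis by linarith
      qed
      have "d * (1 - s - \<gamma>) \<le> (1 - \<gamma>) * e"
      proof -
        have "d * (1 - \<gamma>) \<le> e * (1 - \<gamma>) + s * d" using de g1 unfolding k_def
          by (simp add: field_simps)
        then show ?thesis by (simp add: algebra_simps)
      qed
      also have "\<dots> \<le> 2 * (1 + \<gamma>) * e" using e0 coef(3) by (simp add: mult_right_mono)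
      also have "\<dots> \<le> 2 * (1 + \<gamma>) * (L * infdist x (T x))"
        using L(2) coef(3) unfolding e_def TG_def by (simp add: mult_left_mono)
      finally have "d \<le> 2 * (1 + \<gamma>) * (L * infdist x (T x)) / (1 - s - \<gamma>)"
        using sg by (simp add: pos_le_divide_eq)
      then show ?thesis unfolding C d_def by simp
    qed
    then show ?thesis using xi0 xi1 by blast
  qed
  show ?thesis using Fix SFix part2 part3 by blast
qed

end
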